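(* There is an absolute constant $C>0$ such that the following holds. Let $S$ and $T$ be valid configurations of $n\ge 2$ points each whose smallest enclosing discs have the same center. Then there exists a translation $\vec v$ such that the unlabeled problem from $S$ to $T+\vec v$ is feasible, $|\vec v|\le C\,(r(S)+r(T))\,n$, and $r(S\cup(T+\vec v))\le C\,(r(S)+r(T))\,n$.
   Context: For $p\in\mathbb R^2$, $D(p)$ is the open unit disc centered at $p$. A configuration is a finite set of points in $\mathbb R^2$; it is valid if any two distinct points are at distance at least $2$. $r(P)$ is the radius of the smallest closed disc containing the point set $P$. The unlabeled problem from $S$ to $T'$ is feasible if there exist a bijection $M:S\to T'$ and an ordering $s_1,\dots,s_n$ of $S$ such that for each $i$ the region $\mathrm{conv}(D(s_i)\cup D(M(s_i)))$ swept by translating $D(s_i)$ straight to $M(s_i)$ is disjoint from $D(s_j)$ for all $j>i$ and from $D(M(s_j))$ for all $j<i$. *)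

theory Defs
  imports "HOL-Analysis.Analysis"
begin

type_synonym pt = "real^2"

definition D :: "pt \<Rightarrow> pt set" where
  "D p = ball p 1"

definition valid_config :: "pt set \<Rightarrow> bool" where
  "valid_config P \<longleftrightarrow> finite P \<and> (\<forall>p\<in>P. \<forall>q\<in>P. p \<noteq> q \<longrightarrow> dist p q \<ge> 2)"

definition rad :: "pt set \<Rightarrow> real" where
  "rad P = Inf {\<rho>. \<rho> \<ge> 0 \<and> (\<exists>c. P \<subseteq> cball c \<rho>)}"

definition sed_center :: "pt set \<Rightarrow> pt \<Rightarrow> bool" where
  "sed_center P c \<longleftrightarrow> P \<subseteq> cball c (rad P)"

text \<open>Region swept by translating D(s) straight to t.\<close>
definition swept :: "pt \<Rightarrow> pt \<Rightarrow> pt set" where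
  "swept s t = convex hull (D s \<union> D t)"

definition unlabeled_feasible :: "pt set \<Rightarrow> pt set \<Rightarrow> bool" where
  "unlabeled_feasible S T \<longleftrightarrow>
     (\<exists>M s. bij_betw M S T \<and> bij_betw s {..<card S} S \<and>
        (\<forall>i<card S.
           (\<forall>j. i < j \<and> j < card S \<longrightarrow> swept (s i) (M (s i)) \<inter> D (s j) = {}) \<and>
           (\<forall>j<i. swept (s i) (M (s i)) \<inter> D (M (s j)) = {})))"

end

theory Submission
  imports Defs
begin


lemma packing:
  fixes A :: "pt set" and p :: pt
  assumes fin: "finite A" and sep: "\<forall>a\<in>A. \<forall>b\<in>A. a\<noteq>b \<longrightarrow> dist a b \<ge> 2"
    and near: "\<forall>a\<in>A. dist p a < 4"
  shows "card A \<le> 25"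
proof -
  define m where "m = measure lborel (ball (0::pt) 1)"
  have mpos: "m > 0" unfolding m_def by (rule content_ball_pos) simp
  have mb: "measure lebesgue (ball a r) = r^2 * m" if "r \<ge> 0" for a :: pt and r
    using content_ball_conv_unit_ball[OF that, of a] by (simp add: m_def)
  have disj: "pairwise (\<lambda>a b. disjnt (ball a 1) (ball b 1)) A"
    unfolding pairwise_def disjnt_def
  proof (intro ballI impI)
    fix a b assume "a \<in> A" "b \<in> A" "a \<noteq> b"
    then have "dist a b \<ge> 2" using sep by blast
    then show "ball a 1 \<inter> ball b 1 = {}" 
      by (auto simp: ball_def) (smt (verit) dist_commute dist_triangle)
  qed
  have "measure lebesgue (\<Union>a\<in>A. ball a 1) = (\<Sum>a\<in>A. measure lebesgue (ball a 1))"
    by (rule measure_UNION'[OF fin _ disj]) simp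
  also have "\<dots> = real (card A) * m" using mb[of 1] by simp
  finally have eq: "measure lebesgue (\<Union>a\<in>A. ball a 1) = real (card A) * m" .
  have sub: "(\<Union>a\<in>A. ball a 1) \<subseteq> ball p 5"
  proof
    fix x assume "x \<in> (\<Union>a\<in>A. ball a 1)"
    then obtain a where "a \<in> A" "dist a x < 1" by auto
    with near show "x \<in> ball p 5" by (auto simp: ball_def) (smt (verit) dist_triangle)
  qed
  have "measure lebesgue (\<Union>a\<in>A. ball a 1) \<le> measure lebesgue (ball p 5)"
    by (rule measure_mono_fmeasurable[OF sub]) (auto intro: fmeasurableD simp: fin)
  also have "\<dots> = 25 * m" using mb[of 5 p] by simp
  finally have "real (card A) * m \<le> 25 * m" using eq by simp
  then have "real (card A) \<le> 25" using mpos by simp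
  then show ?thesis by simp
qed



lemma swept_disj:
  assumes far: "\<forall>q\<in>closed_segment a b. dist p q \<ge> 2"
  shows "swept a b \<inter> D p = {}"
proof -
  define K where "K = {x. \<exists>q\<in>closed_segment a b. dist x q < 1}"
  have cK: "convex K"
    unfolding convex_def K_def
  proof (intro ballI allI impI, clarsimp)
    fix x y q1 q2 and u v :: real
    assume h: "q1 \<in> closed_segment a b" "dist x q1 < 1" "q2 \<in> closed_segment a b" "dist y q2 < 1"
      "0 \<le> u" "0 \<le> v" "u + v = 1"
    have qs: "u *\<^sub>R q1 + v *\<^sub>R q2 \<in> closed_segment a b"
      using convex_closed_segment[of a b] h unfolding convex_def by blast
    have "dist (u *\<^sub>R x + v *\<^sub>R y) (u *\<^sub>R q1 + v *\<^sub>R q2) = norm (u *\<^sub>R (x - q1) + v *\<^sub>R (y - q2))"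
      by (simp add: dist_norm algebra_simps)
    also have "\<dots> \<le> u * norm (x - q1) + v * norm (y - q2)"
      using norm_triangle_ineq[of "u *\<^sub>R (x - q1)" "v *\<^sub>R (y - q2)"] h by simp
    also have "\<dots> < 1"
    proof -
      have "norm (x - q1) < 1" "norm (y-q2) < 1" using h by (auto simp: dist_norm)
      show ?thesis
      proof (cases "u > 0")
        case True
        have "u * norm (x - q1) < u" using mult_strict_left_mono[OF \<open>norm (x - q1) < 1\<close> True] by simp
        moreover have "v * norm (y - q2) \<le> v" using mult_left_mono[of "norm (y - q2)" 1 v] \<open>norm (y-q2) < 1\<close> h by simp
        ultimately show ?thesis using h by linarith
      next
        case False
        then have "v > 0" using h by linarith
        have "v * norm (y - q2) < v" using mult_strict_left_mono[OF \<open>norm (y - q2) < 1\<close> \<open>v > 0\<close>] by simp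
        moreover have "u * norm (x - q1) \<le> u" using mult_left_mono[of "norm (x - q1)" 1 u] \<open>norm (x-q1) < 1\<close> h by simp
        ultimately show ?thesis using h by linarith
      qed
    qed
    finally show "\<exists>q\<in>closed_segment a b. dist (u *\<^sub>R x + v *\<^sub>R y) q < 1" using qs by blast
  qed
  have "D a \<union> D b \<subseteq> K" unfolding K_def D_def
    by (auto simp: dist_commute)
  then have "swept a b \<subseteq> K" unfolding swept_def using cK by (simp add: hull_minimal)
  moreover have "K \<inter> D p = {}"
  proof (rule ccontr)
    assume "K \<inter> D p \<noteq> {}"
    then obtain x q where "q \<in> closed_segment a b" "dist x q < 1" "dist p x < 1"
      unfolding K_def D_def by auto
    then show False using far dist_triangle[of p q x] by force
  qed
  ultimately show ?thesis by blast
qed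

lemma key:
  fixes a b p u e :: pt and L R \<eta> :: real
  assumes w: "b - a = L *\<^sub>R u + e" and e: "norm e \<le> R" and u: "norm u \<ge> 1"
    and L: "L \<ge> 3*R" and R: "R \<ge> 0" and pa: "dist p a \<ge> 2" and du: "(p - a) \<bullet> u \<le> 0"
    and close: "dist p a < 4 \<Longrightarrow> (p - a) \<bullet> u \<le> -\<eta>" and Le: "L*\<eta> \<ge> 4*R"
  shows "\<forall>q\<in>closed_segment a b. dist p q \<ge> 2"
proof
  fix q assume "q \<in> closed_segment a b"
  then obtain l where l: "0 \<le> l" "l \<le> 1" "q = (1 - l) *\<^sub>R a + l *\<^sub>R b"
    unfolding closed_segment_def by auto
  define d where "d = p - a"
  define wv where "wv = b - a"
  have pq: "p - q = d - l *\<^sub>R wv" unfolding d_def wv_def l(3) by (simp add: algebra_simps)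
  have nd: "norm d \<ge> 2" using pa by (simp add: d_def dist_norm)
  have expand: "(norm (p - q))^2 = (norm d)^2 - 2*l*(d \<bullet> wv) + l^2 * (norm wv)^2"
    unfolding pq power2_norm_eq_inner by (simp add: algebra_simps inner_commute power2_eq_square)
  have dw: "d \<bullet> wv = L * (d \<bullet> u) + d \<bullet> e" unfolding wv_def w by (simp add: inner_add_right)
  have de: "d \<bullet> e \<le> norm d * R"
    using norm_cauchy_schwarz[of d e] e mult_left_mono[OF e, of "norm d"] by simp
  have L0: "L \<ge> 0" using L R by linarith
  have num: "(2::real)^2 = 4" "(4::real)^2 = 16" by auto
  have "(norm (p - q))^2 \<ge> 4"
  proof (cases "norm d < 4")
    case True
    then have "d \<bullet> u \<le> -\<eta>" using close by (simp add: d_def dist_norm)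
    then have "L * (d \<bullet> u) \<le> - (L*\<eta>)" using L0 mult_left_mono by fastforce
    moreover have "norm d * R \<le> 4 * R" using True R by (simp add: mult_right_mono)
    ultimately have "d \<bullet> wv \<le> 0" using dw de Le by linarith
    then have "(norm (p - q))^2 \<ge> (norm d)^2" proof -
      have "2*l*(d \<bullet> wv) \<le> 0" using \<open>d \<bullet> wv \<le> 0\<close> l by (simp add: mult_nonneg_nonpos)
      moreover have "l^2 * (norm wv)^2 \<ge> 0" by simp
      ultimately show ?thesis using expand by linarith
    qed
    moreover have "(norm d)^2 \<ge> 2^2" by (rule power_mono[OF nd]) simp
    ultimately show ?thesis using num by linarith
  next
    case False
    have "L * (d \<bullet> u) \<le> 0" using L0 du by (simp add: d_def mult_nonneg_nonpos)
    then have dw': "d \<bullet> wv \<le> norm d * R" using dw de by linarith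
    have "norm wv \<ge> L * norm u - norm e"
      using norm_triangle_ineq2[of "L *\<^sub>R u" "-e"] unfolding wv_def w by (simp add: L0)
    moreover have "L * norm u \<ge> L" using mult_left_mono[OF u L0] by simp
    ultimately have nw: "norm wv \<ge> 2 * R" using e L by linarith
    have nw2: "(norm wv)^2 \<ge> (2*R)^2" by (rule power_mono) (use nw R in auto)
    have "l^2 * (norm wv)^2 \<ge> l^2 * (2*R)^2" using nw2 by (simp add: mult_left_mono)
    moreover have "2*l*(d \<bullet> wv) \<le> 2*l*(norm d * R)" using dw' l by (simp add: mult_left_mono)
    ultimately have "(norm (p - q))^2 \<ge> (norm d)^2 - 2*l*(norm d * R) + l^2*(2*R)^2"
      using expand by linarith
    moreover have "(norm d)^2 - 2*l*(norm d * R) + l^2*(2*R)^2 = (2*l*R - norm d / 2)^2 + 3/4 * (norm d)^2"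
      by (simp add: power2_eq_square algebra_simps)
    moreover have "(norm d)^2 \<ge> 4^2" by (rule power_mono) (use False in auto)
    ultimately show ?thesis using zero_le_power2[of "2*l*R - norm d / 2"] num by linarith
  qed
  then have "2^2 \<le> (norm (p - q))^2" using num by simp
  then show "dist p q \<ge> 2" unfolding dist_norm by (rule power2_le_imp_le) simp
qed



lemma arith1:
  fixes d1 d2 a b h :: real
  assumes d: "d1^2 + d2^2 \<ge> 4" and ab: "0\<le>a" "a\<le>1/2" "0\<le>b" "b\<le>1/2" and hab: "\<bar>a - b\<bar> \<ge> h"
    and h: "h > 0" "h \<le> 1" and A: "\<bar>d1 + d2*a\<bar> < h/2" and B: "\<bar>d1 + d2*b\<bar> < h/2"
  shows False
proof (cases "\<bar>d2\<bar> \<le> \<bar>d1\<bar>")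
  case True
  have "d1^2 \<ge> 2" using d True abs_le_square_iff[of d2 d1] by linarith
  then have d1: "\<bar>d1\<bar> \<ge> 1" using abs_le_square_iff[of 1 d1] by simp
  have "\<bar>d2*a\<bar> \<le> \<bar>d1\<bar> / 2" using mult_mono[of "\<bar>d2\<bar>" "\<bar>d1\<bar>" "\<bar>a\<bar>" "1/2"] True ab by (simp add: abs_mult)
  then show False using A d1 h by linarith
next
  case False
  have "d1^2 < d2^2" using False abs_le_square_iff[of d2 d1] by linarith
  then have "d2^2 > 2" using d by linarith
  then have d2: "\<bar>d2\<bar> > 1" using abs_le_square_iff[of d2 1] by simp
  have "\<bar>d2 * (a - b)\<bar> = \<bar>(d1 + d2*a) - (d1 + d2*b)\<bar>" by (simp add: algebra_simps)
  then have "\<bar>d2 * (a - b)\<bar> < h" using A B abs_triangle_ineq4[of "d1 + d2*a" "d1 + d2*b"] by linarith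
  moreover have "\<bar>d2 * (a - b)\<bar> \<ge> h" using mult_mono[of 1 "\<bar>d2\<bar>" h "\<bar>a - b\<bar>"] d2 hab h by (simp add: abs_mult)
  ultimately show False by linarith
qed

lemma inner_vec2: "(d::pt) \<bullet> vector [1, x] = d$1 + d$2 * x"
  by (simp add: inner_vec_def sum_2)

lemma norm2_vec2: "(norm (d::pt))^2 = (d$1)^2 + (d$2)^2"
proof -
  have "d \<bullet> d = d$1*d$1 + d$2*d$2" by (simp only: inner_vec_def sum_2 inner_real_def)
  then show ?thesis unfolding power2_norm_eq_inner by (simp only: power2_eq_square)
qed

lemma good_dir:
  fixes P :: "(pt \<times> pt) set" and N :: nat
  assumes fin: "finite P" and sep: "\<forall>(p,q)\<in>P. dist p q \<ge> 2" and cardP: "card P < N + 1" and N: "N > 0"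
  shows "\<exists>k\<le>N. \<forall>(p,q)\<in>P. \<bar>(p - q) \<bullet> vector [1, real k/(2*N)]\<bar> \<ge> 1/(4*N)"
proof -
  define bad :: "pt \<times> pt \<Rightarrow> nat set" where "bad = (\<lambda>pq. {k\<in>{0..N}. \<bar>(fst pq - snd pq) \<bullet> vector [1, real k/(2*N)]\<bar> < 1/(4*N)})"
  have cb: "card (bad pq) \<le> 1" if "pq \<in> P" for pq
  proof -
    obtain p q where pq: "pq = (p,q)" by fastforce
    define d where "d = p - q"
    have "dist p q \<ge> 2" using sep that pq by auto
    then have "norm d \<ge> 2" by (simp add: d_def dist_norm)
    then have "(norm d)^2 \<ge> 2^2" by (rule power_mono) simp
    then have dd: "(d$1)^2 + (d$2)^2 \<ge> 4" using norm2_vec2[of d] by simp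
    have "\<forall>k\<in>bad pq. \<forall>k'\<in>bad pq. k = k'"
    proof (intro ballI, rule ccontr)
      fix k k' assume k: "k \<in> bad pq" "k' \<in> bad pq" "k \<noteq> k'"
      have kN: "k \<le> N" "k' \<le> N" using k unfolding bad_def by auto
      have Nr: "real N > 0" using N by simp
      define h where "h = 1/(2*real N)"
      define x where "x = real k/(2*real N)"
      define x' where "x' = real k'/(2*real N)"
      have h4: "1/(real (4*N)) = h/2" unfolding h_def by simp
      have A: "\<bar>d$1 + d$2 * x\<bar> < h/2"
        using k(1) unfolding bad_def pq d_def x_def h4[symmetric] by (simp add: inner_vec2)
      have B: "\<bar>d$1 + d$2 * x'\<bar> < h/2"
        using k(2) unfolding bad_def pq d_def x'_def h4[symmetric] by (simp add: inner_vec2)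
      have "\<bar>real k - real k'\<bar> \<ge> 1" using k(3) by linarith
      moreover have "x - x' = (real k - real k') * h" unfolding x_def x'_def h_def using Nr by (simp add: field_simps)
      moreover have "h > 0" unfolding h_def using Nr by simp
      ultimately have hab: "\<bar>x - x'\<bar> \<ge> h"
        using mult_right_mono[of 1 "\<bar>real k - real k'\<bar>" h] by (simp add: abs_mult)
      have x: "0 \<le> x" "x \<le> 1/2" "0 \<le> x'" "x' \<le> 1/2" using kN Nr by (auto simp: x_def x'_def field_simps)
      have "h \<le> 1" "h > 0" using Nr by (auto simp: h_def field_simps)
      then show False using arith1[OF dd x hab _ _ A B] by simp
    qed
    then show ?thesis by (simp add: card_le_Suc0_iff_eq bad_def)
  qed
  have "card (\<Union>pq\<in>P. bad pq) \<le> (\<Sum>pq\<in>P. card (bad pq))" by (rule card_UN_le[OF fin])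
  also have "\<dots> \<le> (\<Sum>pq\<in>P. 1)" by (rule sum_mono) (use cb in auto)
  also have "\<dots> < card {0..N}" using cardP by simp
  finally have "\<not> {0..N} \<subseteq> (\<Union>pq\<in>P. bad pq)"
    using card_mono[of "\<Union>pq\<in>P. bad pq" "{0..N}"] fin unfolding bad_def by (auto simp: not_le)
  then obtain k where k: "k \<in> {0..N}" "k \<notin> (\<Union>pq\<in>P. bad pq)" by blast
  show ?thesis
    by (rule exI[of _ k]) (use k in \<open>auto simp: bad_def not_less\<close>)
qed

lemma sorted_enum:
  fixes S :: "pt set" and f :: "pt \<Rightarrow> real"
  assumes "finite S"
  shows "\<exists>s. bij_betw s {..<card S} S \<and> (\<forall>i j. i < j \<and> j < card S \<longrightarrow> f (s j) \<le> f (s i))"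
proof -
  obtain xs where xs: "set xs = S" "distinct xs" using finite_distinct_list[OF assms] by blast
  define ys where "ys = sort_key (\<lambda>x. - f x) xs"
  have ys: "set ys = S" "distinct ys" "sorted (map (\<lambda>x. - f x) ys)" using xs by (auto simp: ys_def)
  have len: "length ys = card S" using ys distinct_card by fastforce
  have "bij_betw ((!) ys) {..<card S} S" using bij_betw_nth[OF ys(2)] len ys(1) by auto
  moreover have "f (ys ! j) \<le> f (ys ! i)" if "i < j" "j < card S" for i j
    using sorted_nth_mono[OF ys(3), of i j] that len by simp
  ultimately show ?thesis by blast
qed



lemma close_pairs:
  fixes A :: "pt set"
  assumes fin: "finite A" and sep: "\<forall>a\<in>A. \<forall>b\<in>A. a\<noteq>b \<longrightarrow> dist a b \<ge> 2"
  shows "card {(p,q). p\<in>A \<and> q\<in>A \<and> p\<noteq>q \<and> dist p q < 4} \<le> 24 * card A"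
proof -
  have eq: "{(p,q). p\<in>A \<and> q\<in>A \<and> p\<noteq>q \<and> dist p q < 4} = Sigma A (\<lambda>p. {q\<in>A. dist p q < 4} - {p})"
    by auto
  have cb: "card ({q\<in>A. dist p q < 4} - {p}) \<le> 24" if "p \<in> A" for p
  proof -
    have "card {q\<in>A. dist p q < 4} \<le> 25"
      by (rule packing) (use fin sep in auto)
    moreover have "p \<in> {q\<in>A. dist p q < 4}" using that by simp
    ultimately show ?thesis using fin by (simp add: card_Diff_singleton)
  qed
  have "card (Sigma A (\<lambda>p. {q\<in>A. dist p q < 4} - {p})) = (\<Sum>p\<in>A. card ({q\<in>A. dist p q < 4} - {p}))"
    by (rule card_SigmaI) (use fin in auto)
  also have "\<dots> \<le> (\<Sum>p\<in>A. 24)" by (rule sum_mono) (use cb in auto)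
  finally show ?thesis using eq by simp
qed

theorem mainTheorem7:
  "\<exists>C::real. C > 0 \<and>
     (\<forall>S T n c. valid_config S \<and> valid_config T \<and> card S = n \<and> card T = n \<and> n \<ge> 2 \<and>
        sed_center S c \<and> sed_center T c \<longrightarrow>
        (\<exists>v::pt. unlabeled_feasible S ((\<lambda>x. x + v) ` T) \<and>
           norm v \<le> C * (rad S + rad T) * real n \<and>
           rad (S \<union> (\<lambda>x. x + v) ` T) \<le> C * (rad S + rad T) * real n))"
proof (rule exI[of _ "2000::real"], rule conjI, simp, intro allI impI)
  fix S T :: "pt set" and n :: nat and c :: pt
  assume H: "valid_config S \<and> valid_config T \<and> card S = n \<and> card T = n \<and> n \<ge> 2 \<and>
        sed_center S c \<and> sed_center T c"
  have finS: "finite S" and sepS: "\<forall>a\<in>S. \<forall>b\<in>S. a\<noteq>b \<longrightarrow> dist a b \<ge> 2"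
    and finT: "finite T" and sepT: "\<forall>a\<in>T. \<forall>b\<in>T. a\<noteq>b \<longrightarrow> dist a b \<ge> 2"
    using H unfolding valid_config_def by auto
  have cS: "card S = n" and cT: "card T = n" and n2: "n \<ge> 2" using H by auto
  define rS where "rS = rad S"
  define rT where "rT = rad T"
  define R where "R = rS + rT"
  have Sc: "S \<subseteq> cball c rS" and Tc: "T \<subseteq> cball c rT"
    using H unfolding sed_center_def rS_def rT_def by auto
  have "S \<noteq> {}" using cS n2 by auto
  then obtain p0 where "p0 \<in> S" by blast
  then have "dist c p0 \<le> rS" using Sc by auto
  then have rS0: "rS \<ge> 0" using zero_le_dist[of c p0] by linarith
  have "T \<noteq> {}" using cT n2 by auto
  then obtain p0 where "p0 \<in> T" by blast
  then have "dist c p0 \<le> rT" using Tc by auto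
  then have rT0: "rT \<ge> 0" using zero_le_dist[of c p0] by linarith
  have R0: "R \<ge> 0" using rS0 rT0 by (simp add: R_def)
  define N where "N = 50 * n"
  have N0: "N > 0" using n2 by (simp add: N_def)
  define P1 where "P1 = {(p,q). p\<in>S \<and> q\<in>S \<and> p\<noteq>q \<and> dist p q < 4}"
  define P2 where "P2 = {(p,q). p\<in>T \<and> q\<in>T \<and> p\<noteq>q \<and> dist p q < 4}"
  have finP: "finite (P1 \<union> P2)"
  proof -
    have "P1 \<subseteq> S \<times> S" "P2 \<subseteq> T \<times> T" by (auto simp: P1_def P2_def)
    then show ?thesis using finS finT by (meson finite_SigmaI finite_Un finite_subset)
  qed
  have "card (P1 \<union> P2) \<le> card P1 + card P2" by (rule card_Un_le)
  also have "\<dots> \<le> 24 * n + 24 * n"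
    using close_pairs[OF finS sepS] close_pairs[OF finT sepT] cS cT by (simp add: P1_def P2_def)
  finally have cardP: "card (P1 \<union> P2) < N + 1" by (simp add: N_def)
  have sepP: "\<forall>(p,q)\<in>P1 \<union> P2. dist p q \<ge> 2" using sepS sepT by (auto simp: P1_def P2_def)
  obtain k where kN: "k \<le> N" and good:
    "\<forall>(p,q)\<in>P1 \<union> P2. \<bar>(p - q) \<bullet> vector [1, real k/(2*N)]\<bar> \<ge> 1/(4*N)"
    using good_dir[OF finP sepP cardP N0] by blast
  define u :: pt where "u = vector [1, real k/(2*N)]"
  define \<eta> :: real where "\<eta> = 1/(4*N)"
  define L :: real where "L = 4 * R * (4*N)"
  define v :: pt where "v = L *\<^sub>R u"
  have goodu: "\<bar>(p - q) \<bullet> u\<bar> \<ge> \<eta>" if "(p,q) \<in> P1 \<union> P2" for p q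
    using good that unfolding u_def \<eta>_def by auto
  have Le: "L * \<eta> = 4 * R" using N0 by (simp add: L_def \<eta>_def)
  have L3: "L \<ge> 3 * R"
  proof -
    have "R * real N \<ge> R * 1" using R0 N0 by (intro mult_left_mono) auto
    then show ?thesis using R0 by (simp add: L_def)
  qed
  have L0: "L \<ge> 0" using R0 by (simp add: L_def)
  have u1: "norm u \<ge> 1" using component_le_norm_cart[of u 1] by (simp add: u_def)
  have kk: "real k/(2*N) \<le> 1/2" using kN N0 by (simp add: field_simps)
  have u2: "norm u \<le> 3/2"
  proof -
    have "norm u \<le> (\<Sum>i\<in>UNIV. \<bar>u$i\<bar>)" by (rule norm_le_l1_cart)
    also have "\<dots> = 1 + real k/(2*N)" by (simp add: sum_2 u_def)
    finally show ?thesis using kk by simp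
  qed
  have nv: "norm v \<le> 1200 * R * n"
  proof -
    have "norm v = L * norm u" using L0 by (simp add: v_def)
    also have "\<dots> \<le> L * (3/2)" using mult_left_mono[OF u2 L0] .
    also have "\<dots> = 1200 * R * n" by (simp add: L_def N_def)
    finally show ?thesis .
  qed
  have nvF: "norm v \<le> 2000 * (rad S + rad T) * real n"
  proof -
    have "R * real n \<ge> 0" using R0 by simp
    then have "1200 * R * real n \<le> 2000 * R * real n" by (simp add: mult.assoc)
    then show ?thesis using nv unfolding R_def rS_def rT_def by linarith
  qed
  have sub: "S \<union> (\<lambda>x. x + v) ` T \<subseteq> cball c (norm v + R)"
  proof
    fix x assume "x \<in> S \<union> (\<lambda>x. x + v) ` T"
    then show "x \<in> cball c (norm v + R)"
    proof
      assume "x \<in> S" then have "dist c x \<le> rS" using Sc by auto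
      then show ?thesis using rT0 norm_ge_zero[of v] unfolding R_def mem_cball by linarith
    next
      assume "x \<in> (\<lambda>x. x + v) ` T"
      then obtain y where y: "y \<in> T" "x = y + v" by auto
      then have "dist c y \<le> rT" using Tc by auto
      moreover have "dist c x \<le> dist c y + norm v" using y dist_triangle[of c x y]
        by (simp add: dist_norm)
      ultimately show ?thesis using rS0 norm_ge_zero[of v] unfolding R_def mem_cball by linarith
    qed
  qed
  have "rad (S \<union> (\<lambda>x. x + v) ` T) \<le> norm v + R"
    unfolding rad_def
  proof (rule cInf_lower)
    show "norm v + R \<in> {\<rho>. \<rho> \<ge> 0 \<and> (\<exists>c. S \<union> (\<lambda>x. x + v) ` T \<subseteq> cball c \<rho>)}"
      using sub R0 by auto
    show "bdd_below {\<rho>. \<rho> \<ge> 0 \<and> (\<exists>c. S \<union> (\<lambda>x. x + v) ` T \<subseteq> cball c \<rho>)}"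
      by (rule bdd_belowI[of _ 0]) auto
  qed
  then have radF: "rad (S \<union> (\<lambda>x. x + v) ` T) \<le> 2000 * (rad S + rad T) * real n"
  proof -
    have "R * real n \<ge> R * 1" using R0 n2 by (intro mult_left_mono) auto
    moreover have "norm v \<le> 1200 * (R * real n)" using nv by (simp add: mult.assoc)
    ultimately have "norm v + R \<le> 2000 * (R * real n)" using R0 by simp
    then have "norm v + R \<le> 2000 * R * real n" by (simp add: mult.assoc)
    then show ?thesis using \<open>rad (S \<union> (\<lambda>x. x + v) ` T) \<le> norm v + R\<close> unfolding R_def rS_def rT_def by linarith
  qed
  obtain s where s: "bij_betw s {..<n} S" and ssort: "\<And>i j. i < j \<Longrightarrow> j < n \<Longrightarrow> s j \<bullet> u \<le> s i \<bullet> u"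
    using sorted_enum[OF finS, of "\<lambda>p. p \<bullet> u"] cS by auto
  obtain t where t: "bij_betw t {..<n} T" and tsort: "\<And>i j. i < j \<Longrightarrow> j < n \<Longrightarrow> t j \<bullet> u \<le> t i \<bullet> u"
    using sorted_enum[OF finT, of "\<lambda>p. p \<bullet> u"] cT by auto
  define M where "M = (\<lambda>x. t (inv_into {..<n} s x) + v)"
  have bM: "bij_betw M S ((\<lambda>x. x + v) ` T)"
  proof -
    have b1: "bij_betw (inv_into {..<n} s) S {..<n}" by (rule bij_betw_inv_into[OF s])
    have b3: "bij_betw (\<lambda>x. x + v) T ((\<lambda>x. x + v) ` T)" by (rule bij_betw_imageI) (auto simp: inj_on_def)
    have "bij_betw ((\<lambda>x. x + v) \<circ> t \<circ> inv_into {..<n} s) S ((\<lambda>x. x + v) ` T)"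
      by (rule bij_betw_trans[OF b1 bij_betw_trans[OF t b3]]) 
    then show ?thesis by (simp add: M_def comp_def)
  qed
  have injs: "inj_on s {..<n}" using s bij_betw_imp_inj_on by blast
  have injt: "inj_on t {..<n}" using t bij_betw_imp_inj_on by blast
  have sS: "s i \<in> S" if "i < n" for i using s that bij_betwE by blast
  have tT: "t i \<in> T" if "i < n" for i using t that bij_betwE by blast
  have Ms: "M (s i) = t i + v" if "i < n" for i
    using that injs by (simp add: M_def inv_into_f_f)
  have eR: "norm (t i - s i) \<le> R" if "i < n" for i
  proof -
    have "dist c (t i) \<le> rT" "dist c (s i) \<le> rS" using Tc Sc tT[OF that] sS[OF that] by auto
    then show ?thesis using dist_triangle[of "t i" "s i" c] by (simp add: R_def dist_norm norm_minus_commute dist_commute)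
  qed
  have swc: "swept a b = swept b a" for a b by (simp add: swept_def Un_commute)
  have feasF: "unlabeled_feasible S ((\<lambda>x. x + v) ` T)"
    unfolding unlabeled_feasible_def cS
  proof (intro exI[of _ M] exI[of _ s] conjI bM s, intro allI impI)
    fix i assume i: "i < n"
    have A1: "\<forall>j. i < j \<and> j < n \<longrightarrow> swept (s i) (M (s i)) \<inter> D (s j) = {}"
    proof (intro allI impI)
      fix j assume j: "i < j \<and> j < n"
      have ne: "s j \<noteq> s i" using inj_onD[OF injs, of j i] i j by auto
      have dd: "dist (s j) (s i) \<ge> 2" using sepS sS ne i j by auto
      have du: "(s j - s i) \<bullet> u \<le> 0" using ssort[of i j] j by (simp add: inner_diff_left)
      have cl: "(s j - s i) \<bullet> u \<le> -\<eta>" if "dist (s j) (s i) < 4"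
      proof -
        have "(s j, s i) \<in> P1 \<union> P2" using that ne sS i j by (auto simp: P1_def)
        then show ?thesis using goodu du by fastforce
      qed
      have w: "(t i + v) - s i = L *\<^sub>R u + (t i - s i)" by (simp add: v_def algebra_simps)
      show "swept (s i) (M (s i)) \<inter> D (s j) = {}"
        unfolding Ms[OF i]
        by (rule swept_disj, rule key[OF w eR[OF i] u1 L3 R0 dd du cl]) (use Le in auto)
    qed
    have A2: "\<forall>j<i. swept (s i) (M (s i)) \<inter> D (M (s j)) = {}"
    proof (intro allI impI)
      fix j assume j: "j < i"
      have jn: "j < n" using i j by simp
      have ne: "t j \<noteq> t i" using inj_onD[OF injt, of j i] i jn j by auto
      have dd: "dist (t j + v) (t i + v) \<ge> 2" using sepT tT ne i jn by auto
      have du: "((t j + v) - (t i + v)) \<bullet> (-u) \<le> 0" using tsort[of j i] j i by (simp add: inner_diff_left)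
      have cl: "((t j + v) - (t i + v)) \<bullet> (-u) \<le> -\<eta>" if "dist (t j + v) (t i + v) < 4"
      proof -
        have "(t j, t i) \<in> P1 \<union> P2" using that ne tT i jn by (auto simp: P2_def)
        then have "\<bar>(t j - t i) \<bullet> u\<bar> \<ge> \<eta>" using goodu by blast
        moreover have "(t j - t i) \<bullet> u \<ge> 0" using du by simp
        ultimately show ?thesis by simp
      qed
      have w: "s i - (t i + v) = L *\<^sub>R (-u) + (s i - t i)" by (simp add: v_def algebra_simps)
      have e': "norm (s i - t i) \<le> R" using eR[OF i] by (simp add: norm_minus_commute)
      have u1': "norm (-u) \<ge> 1" using u1 by simp
      show "swept (s i) (M (s i)) \<inter> D (M (s j)) = {}"
        unfolding Ms[OF i] Ms[OF jn] swc[of "s i"]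
        by (rule swept_disj, rule key[OF w e' u1' L3 R0 dd du cl]) (use Le in auto)
    qed
    show "(\<forall>j. i < j \<and> j < n \<longrightarrow> swept (s i) (M (s i)) \<inter> D (s j) = {}) \<and>
          (\<forall>j<i. swept (s i) (M (s i)) \<inter> D (M (s j)) = {})" using A1 A2 by blast
  qed
  show "\<exists>v::pt. unlabeled_feasible S ((\<lambda>x. x + v) ` T) \<and>
           norm v \<le> 2000 * (rad S + rad T) * real n \<and>
           rad (S \<union> (\<lambda>x. x + v) ` T) \<le> 2000 * (rad S + rad T) * real n"
    using feasF nvF radF by blast
qed


end
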